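(* Let $(\mathbf X_k)_{k\in\mathbb Z_+}$ be a 2-type doubly symmetric Galton--Watson process with immigration (see context) with offspring means $(\alpha,\beta)\in[0,1]^2$ such that $\alpha+\beta=1$, with $\mathbf X_0=\mathbf 0$, and suppose $\mathbb E\|\boldsymbol\xi_{1,1,1}\|^\ell,\mathbb E\|\boldsymbol\xi_{1,1,2}\|^\ell,\mathbb E\|\boldsymbol\varepsilon_1\|^\ell<\infty$ for some $\ell\in\mathbb N$. Then $\sup_{k\in\mathbb N}k^{-\ell}\,\mathbb E\|\mathbf X_k\|^\ell<\infty$.
   Context: Process: $\mathbf X_k=(X_{k,1},X_{k,2})^\top$, $\mathbf X_0=\mathbf 0$, and for $k\in\mathbb N$, $\mathbf X_k=\sum_{j=1}^{X_{k-1,1}}\boldsymbol\xi_{k,j,1}+\sum_{j=1}^{X_{k-1,2}}\boldsymbol\xi_{k,j,2}+\boldsymbol\varepsilon_k$, where $\{\boldsymbol\xi_{k,j,i},\boldsymbol\varepsilon_k:k,j\in\mathbb N,i\in\{1,2\}\}$ are independent $\mathbb Z_+^2$-valued random vectors and each of the families $\{\boldsymbol\xi_{k,j,1}\}$, $\{\boldsymbol\xi_{k,j,2}\}$, $\{\boldsymbol\varepsilon_k\}$ is identically distributed. Doubly symmetric with offspring means $(\alpha,\beta)$: $\mathbb E\boldsymbol\xi_{1,1,1}=(\alpha,\beta)^\top$, $\mathbb E\boldsymbol\xi_{1,1,2}=(\beta,\alpha)^\top$. *)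

theory Defs
  imports "HOL-Probability.Probability"
begin

text \<open>Offspring vectors xi k j i (generation k,
 individual j, type i in {1,2}) and immigration eps k.\<close>

fun gwi :: "(nat \<Rightarrow> nat \<Rightarrow> nat \<Rightarrow> 'a \<Rightarrow> nat \<times> nat) \<Rightarrow> (nat \<Rightarrow> 'a \<Rightarrow> nat \<times> nat)
            \<Rightarrow> nat \<Rightarrow> 'a \<Rightarrow> nat \<times> nat" where
  "gwi xi eps 0 \<omega> = (0, 0)"
| "gwi xi eps (Suc k) \<omega> =
     ((\<Sum>j\<in>{1..fst (gwi xi eps k \<omega>)}. fst (xi (Suc k) j 1 \<omega>))
        + (\<Sum>j\<in>{1..snd (gwi xi eps k \<omega>)}. fst (xi (Suc k) j 2 \<omega>))
        + fst (eps (Suc k) \<omega>),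
      (\<Sum>j\<in>{1..fst (gwi xi eps k \<omega>)}. snd (xi (Suc k) j 1 \<omega>))
        + (\<Sum>j\<in>{1..snd (gwi xi eps k \<omega>)}. snd (xi (Suc k) j 2 \<omega>))
        + snd (eps (Suc k) \<omega>))"

definition znorm :: "nat \<times> nat \<Rightarrow> real" where
  "znorm v = norm (real (fst v), real (snd v))"

definition gwi_index :: "((nat \<times> nat \<times> nat) + nat) set" where
  "gwi_index = Inl ` {(k, j, i). 1 \<le> k \<and> 1 \<le> j \<and> i \<in> {1, 2}} \<union> Inr ` {1..}"

definition gwi_family :: "(nat \<Rightarrow> nat \<Rightarrow> nat \<Rightarrow> 'a \<Rightarrow> nat \<times> nat) \<Rightarrow> (nat \<Rightarrow> 'a \<Rightarrow> nat \<times> nat)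
   \<Rightarrow> ((nat \<times> nat \<times> nat) + nat) \<Rightarrow> 'a \<Rightarrow> nat \<times> nat" where
  "gwi_family xi eps idx = (case idx of Inl (k, j, i) \<Rightarrow> xi k j i | Inr k \<Rightarrow> eps k)"

end

theory Submission
  imports Defs
begin



locale gwl = prob_space M for M :: "'a measure" +
  fixes xi :: "nat \<Rightarrow> nat \<Rightarrow> nat \<Rightarrow> 'a \<Rightarrow> nat \<times> nat"
    and eps :: "nat \<Rightarrow> 'a \<Rightarrow> nat \<times> nat"
  assumes indep: "indep_vars (\<lambda>_. count_space UNIV) (gwi_family xi eps) gwi_index"
begin

abbreviation "fam \<equiv> gwi_family xi eps"

definition Gen :: "((nat \<times> nat \<times> nat) + nat) \<Rightarrow> 'a set set" where
  "Gen i = {fam i -` A \<inter> space M | A. A \<in> sets (count_space (UNIV::(nat\<times>nat) set))}"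

definition Sig :: "((nat \<times> nat \<times> nat) + nat) set \<Rightarrow> 'a measure" where
  "Sig K = sigma (space M) (\<Union>i\<in>K. Gen i)"

lemma Gen_sub: "Gen i \<subseteq> Pow (space M)"
  unfolding Gen_def by auto

lemma Sig_space[simp]: "space (Sig K) = space M"
  unfolding Sig_def using Gen_sub by (auto simp: space_measure_of_conv)

lemma Sig_sets: "sets (Sig K) = sigma_sets (space M) (\<Union>i\<in>K. Gen i)"
  unfolding Sig_def using Gen_sub by (intro sets_measure_of) auto

lemma fam_meas: "i \<in> K \<Longrightarrow> fam i \<in> measurable (Sig K) (count_space UNIV)"
  by (rule measurableI) (auto simp: Sig_sets Gen_def intro!: sigma_sets.Basic)

lemma rv_fam: "i \<in> gwi_index \<Longrightarrow> fam i \<in> measurable M (count_space UNIV)"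
  using indep unfolding indep_vars_def2 by auto

lemma Sig_subalg: "K \<subseteq> gwi_index \<Longrightarrow> subalgebra M (Sig K)"
  unfolding subalgebra_def
proof safe
  assume K: "K \<subseteq> gwi_index"
  show "x \<in> sets M" if "x \<in> sets (Sig K)" for x
    using that unfolding Sig_sets
  proof (induction rule: sigma_sets.induct)
    case (Basic a)
    then obtain i A where "i \<in> K" "a = fam i -` A \<inter> space M" by (auto simp: Gen_def)
    then show ?case using rv_fam[of i] K by (auto simp: measurable_def)
  qed auto
qed (simp_all add: Sig_space)

lemma Sig_meas_M: "K \<subseteq> gwi_index \<Longrightarrow> f \<in> measurable (Sig K) N \<Longrightarrow> f \<in> measurable M N"
  using Sig_subalg measurable_from_subalg by blast

lemma Sig_mono: "K \<subseteq> K' \<Longrightarrow> f \<in> measurable (Sig K) N \<Longrightarrow> f \<in> measurable (Sig K') N"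
  apply (rule measurable_from_subalg[of _ "Sig K"])
   apply (auto simp: subalgebra_def Sig_sets)
  apply (erule sigma_sets_mono'[THEN subsetD, rotated]) by auto

lemma indep_prod:
  fixes g0 g1 :: "'a \<Rightarrow> ennreal"
  assumes K: "K0 \<subseteq> gwi_index" "K1 \<subseteq> gwi_index" "K0 \<inter> K1 = {}"
    and g: "g0 \<in> borel_measurable (Sig K0)" "g1 \<in> borel_measurable (Sig K1)"
  shows "(\<integral>\<^sup>+\<omega>. g0 \<omega> * g1 \<omega> \<partial>M) = (\<integral>\<^sup>+\<omega>. g0 \<omega> \<partial>M) * (\<integral>\<^sup>+\<omega>. g1 \<omega> \<partial>M)"
proof -
  define I where "I = (\<lambda>b::bool. if b then K1 else K0)"
  define G where "G = (\<lambda>b::bool. if b then g1 else g0)"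
  have ind: "indep_sets Gen gwi_index"
    using indep unfolding indep_vars_def2 Gen_def by simp
  have c: "indep_sets (\<lambda>b. sigma_sets (space M) (\<Union>i\<in>I b. Gen i)) UNIV"
  proof (rule indep_sets_collect_sigma)
    show "indep_sets Gen (\<Union>j\<in>UNIV. I j)"
      by (rule indep_sets_mono[OF ind]) (use K in \<open>auto simp: I_def\<close>)
    show "Int_stable (Gen i)" for i
      unfolding Gen_def
      apply (auto simp: Int_stable_def)
      apply (rule_tac x="A \<inter> Aa" in exI)
      apply auto
      done
    show "disjoint_family_on I UNIV"
      using K by (auto simp: disjoint_family_on_def I_def)
  qed
  have gm: "G b \<in> borel_measurable (Sig (I b))" for b
    using g by (cases b) (auto simp: G_def I_def)
  have iv: "indep_vars (\<lambda>_. borel) G UNIV"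
    unfolding indep_vars_def2
  proof
    show "\<forall>b\<in>UNIV. random_variable borel (G b)"
    proof
      fix b :: bool
      show "random_variable borel (G b)"
        using gm[of b] K Sig_meas_M[of "I b"] by (cases b) (auto simp: I_def)
    qed
    show "indep_sets (\<lambda>b. {G b -` A \<inter> space M |A. A \<in> sets borel}) UNIV"
    proof (rule indep_sets_mono_sets[OF c])
      fix b :: bool
      show "{G b -` A \<inter> space M |A. A \<in> sets borel} \<subseteq> sigma_sets (space M) (\<Union>i\<in>I b. Gen i)"
        using gm[of b] by (auto simp: measurable_def Sig_sets)
    qed
  qed
  have "(\<integral>\<^sup>+\<omega>. (\<Prod>b\<in>UNIV. G b \<omega>) \<partial>M) = (\<Prod>b\<in>UNIV. \<integral>\<^sup>+\<omega>. G b \<omega> \<partial>M)"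
    by (rule indep_vars_nn_integral[OF _ iv]) auto
  then show ?thesis by (simp add: UNIV_bool G_def mult.commute)
qed

lemma binom_bound:
  fixes U W :: "'a \<Rightarrow> real"
  assumes K: "K0 \<subseteq> gwi_index" "K1 \<subseteq> gwi_index" "K0 \<inter> K1 = {}"
    and mU: "U \<in> borel_measurable (Sig K0)" and mW: "W \<in> borel_measurable (Sig K1)"
    and pos: "\<And>\<omega>. 0 \<le> U \<omega>" "\<And>\<omega>. 0 \<le> W \<omega>"
    and a: "\<And>q. q \<le> p \<Longrightarrow> (\<integral>\<^sup>+\<omega>. ennreal (U \<omega> ^ q) \<partial>M) \<le> ennreal (a q)"
    and b: "\<And>j. j \<le> p \<Longrightarrow> (\<integral>\<^sup>+\<omega>. ennreal (W \<omega> ^ j) \<partial>M) \<le> ennreal (b j)"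
    and apos: "\<And>q. 0 \<le> a q" and bpos: "\<And>q. 0 \<le> b q"
  shows "(\<integral>\<^sup>+\<omega>. ennreal ((U \<omega> + W \<omega>) ^ p) \<partial>M)
           \<le> ennreal (\<Sum>j\<le>p. real (p choose j) * a (p - j) * b j)"
proof -
  have mU': "U \<in> borel_measurable M" using Sig_meas_M[OF K(1) mU] .
  have mW': "W \<in> borel_measurable M" using Sig_meas_M[OF K(2) mW] .
  have eq: "(U \<omega> + W \<omega>) ^ p = (\<Sum>j\<le>p. real (p choose j) * (U \<omega> ^ (p - j) * W \<omega> ^ j))" for \<omega>
    using binomial_ring[of "W \<omega>" "U \<omega>" p] by (simp add: add.commute mult_ac)
  have "(\<integral>\<^sup>+\<omega>. ennreal ((U \<omega> + W \<omega>) ^ p) \<partial>M)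
      = (\<integral>\<^sup>+\<omega>. (\<Sum>j\<le>p. ennreal (real (p choose j)) * (ennreal (U \<omega> ^ (p - j)) * ennreal (W \<omega> ^ j))) \<partial>M)"
    unfolding eq using pos
    by (intro nn_integral_cong) (simp add: ennreal_mult[symmetric] sum_nonneg)
  also have "\<dots> = (\<Sum>j\<le>p. ennreal (real (p choose j)) * ((\<integral>\<^sup>+\<omega>. ennreal (U \<omega> ^ (p - j)) \<partial>M) * (\<integral>\<^sup>+\<omega>. ennreal (W \<omega> ^ j) \<partial>M)))"
  proof -
    have "(\<integral>\<^sup>+\<omega>. (\<Sum>j\<le>p. ennreal (real (p choose j)) * (ennreal (U \<omega> ^ (p - j)) * ennreal (W \<omega> ^ j))) \<partial>M)
       = (\<Sum>j\<le>p. (\<integral>\<^sup>+\<omega>. ennreal (real (p choose j)) * (ennreal (U \<omega> ^ (p - j)) * ennreal (W \<omega> ^ j)) \<partial>M))"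
      by (rule nn_integral_sum) (use mU' mW' in measurable)
    also have "\<dots> = (\<Sum>j\<le>p. ennreal (real (p choose j)) * ((\<integral>\<^sup>+\<omega>. ennreal (U \<omega> ^ (p - j)) \<partial>M) * (\<integral>\<^sup>+\<omega>. ennreal (W \<omega> ^ j) \<partial>M)))"
    proof (intro sum.cong refl)
      fix j
      have "(\<integral>\<^sup>+\<omega>. ennreal (real (p choose j)) * (ennreal (U \<omega> ^ (p - j)) * ennreal (W \<omega> ^ j)) \<partial>M)
          = ennreal (real (p choose j)) * (\<integral>\<^sup>+\<omega>. ennreal (U \<omega> ^ (p - j)) * ennreal (W \<omega> ^ j) \<partial>M)"
        by (rule nn_integral_cmult) (use mU' mW' in measurable)
      also have "(\<integral>\<^sup>+\<omega>. ennreal (U \<omega> ^ (p - j)) * ennreal (W \<omega> ^ j) \<partial>M)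
          = (\<integral>\<^sup>+\<omega>. ennreal (U \<omega> ^ (p - j)) \<partial>M) * (\<integral>\<^sup>+\<omega>. ennreal (W \<omega> ^ j) \<partial>M)"
        by (rule indep_prod[OF K]) (use mU mW in measurable)
      finally show "(\<integral>\<^sup>+\<omega>. ennreal (real (p choose j)) * (ennreal (U \<omega> ^ (p - j)) * ennreal (W \<omega> ^ j)) \<partial>M)
          = ennreal (real (p choose j)) * ((\<integral>\<^sup>+\<omega>. ennreal (U \<omega> ^ (p - j)) \<partial>M) * (\<integral>\<^sup>+\<omega>. ennreal (W \<omega> ^ j) \<partial>M))" .
    qed
    finally show ?thesis .
  qed
  also have "\<dots> \<le> (\<Sum>j\<le>p. ennreal (real (p choose j)) * (ennreal (a (p - j)) * ennreal (b j)))"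
    by (intro sum_mono mult_left_mono mult_mono a b) auto
  also have "\<dots> = ennreal (\<Sum>j\<le>p. real (p choose j) * a (p - j) * b j)"
    using apos bpos by (simp add: ennreal_mult[symmetric] mult.assoc)
  finally show ?thesis .
qed

end



fun DD :: "real \<Rightarrow> nat \<Rightarrow> real" where
  "DD B 0 = 0"
| "DD B (Suc r) = 4 ^ Suc r * B ^ (r + 2) * (1 + (\<Sum>q\<le>r. DD B q))"

lemma DD_nonneg: "0 \<le> B \<Longrightarrow> 0 \<le> DD B p"
proof (induction p rule: less_induct)
  case (less p)
  show ?case
  proof (cases p)
    case (Suc n)
    have "0 \<le> (\<Sum>q\<le>n. DD B q)" using less Suc by (intro sum_nonneg) auto
    then show ?thesis using Suc less.prems by simp
  qed simp
qed

lemma bern2: "0 \<le> (m::real) \<Longrightarrow> 0 \<le> x \<Longrightarrow> m ^ Suc n + real (Suc n) * m ^ n * x \<le> (m + x) ^ Suc n"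
proof (induction n)
  case 0 then show ?case by simp
next
  case (Suc n)
  have "(m + x) ^ Suc (Suc n) = (m + x) * (m + x) ^ Suc n" by simp
  also have "\<dots> \<ge> (m + x) * (m ^ Suc n + real (Suc n) * m ^ n * x)"
    using Suc by (intro mult_left_mono) auto
  finally have h: "(m + x) * (m ^ Suc n + real (Suc n) * m ^ n * x) \<le> (m + x) ^ Suc (Suc n)" .
  have "m ^ Suc (Suc n) + real (Suc (Suc n)) * m ^ Suc n * x
      \<le> (m + x) * (m ^ Suc n + real (Suc n) * m ^ n * x)"
    using Suc.prems by (simp add: algebra_simps)
  then show ?case using h by linarith
qed

lemma choose_tail: "(\<Sum>j\<le>r. real (Suc (Suc r) choose (j + 2))) \<le> 2 ^ Suc (Suc r)"
proof -
  have "(\<Sum>k\<le>Suc (Suc r). real (Suc (Suc r) choose k)) = 2 ^ Suc (Suc r)"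
    using choose_row_sum[of "Suc (Suc r)"] by (metis of_nat_numeral of_nat_power of_nat_sum)
  moreover have "(\<Sum>k\<le>Suc (Suc r). real (Suc (Suc r) choose k))
     = real (Suc (Suc r) choose 0) + real (Suc (Suc r) choose 1) + (\<Sum>j\<le>r. real (Suc (Suc r) choose (j + 2)))"
    apply (subst sum.atMost_Suc_shift)
    apply (subst sum.atMost_Suc_shift)
    by (simp del: binomial_Suc_Suc)
  ultimately show ?thesis by simp
qed

lemma step_ineq:
  fixes B m mi N :: real
  assumes B: "1 \<le> B" and m: "0 \<le> m" "m \<le> B * N" and mi: "0 \<le> mi" "mi \<le> B" and N: "1 \<le> N"
  shows "(\<Sum>j\<le>p. real (p choose j) * (m ^ (p - j) + DD B (p - j) * N ^ (p - j - 1))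
            * (if j = 0 then 1 else if j = 1 then mi else B))
         \<le> (m + mi) ^ p + DD B p * (N + 1) ^ (p - 1)"
proof (cases p)
  case 0 then show ?thesis by simp
next
  case (Suc p1)
  show ?thesis
  proof (cases p1)
    case 0 then show ?thesis using Suc by (simp add: atMost_Suc)
  next
    case (Suc r)
    have p: "p = Suc (Suc r)" using Suc \<open>p = Suc p1\<close> by simp
    define S where "S = (\<Sum>q\<le>Suc r. DD B q)"
    have S0: "0 \<le> S" unfolding S_def using B DD_nonneg[of B] by (intro sum_nonneg) auto
    have DDle: "DD B q \<le> S" if "q \<le> Suc r" for q
      unfolding S_def using B that by (intro member_le_sum) (auto intro: DD_nonneg)
    have DDp: "DD B p = 4 ^ Suc (Suc r) * B ^ (Suc r + 2) * (1 + S)"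
      unfolding p S_def by simp
    define f where "f j = real (p choose j) * (m ^ (p - j) + DD B (p - j) * N ^ (p - j - 1))
            * (if j = 0 then 1 else if j = 1 then mi else B)" for j
    have split: "(\<Sum>j\<le>p. f j) = f 0 + f 1 + (\<Sum>j\<le>r. f (j + 2))"
      unfolding p
      apply (subst sum.atMost_Suc_shift)
      apply (subst sum.atMost_Suc_shift)
      by (simp del: binomial_Suc_Suc)
    have f0: "f 0 = m ^ p + DD B p * N ^ (Suc r)" unfolding f_def p by simp
    have f1: "f 1 = real p * m ^ Suc r * mi + real p * DD B (Suc r) * N ^ r * mi"
      unfolding f_def p by (simp add: algebra_simps)
    have Npow: "N ^ a \<le> N ^ r" if "a \<le> r" for a using N that by (simp add: power_increasing)
    have ftail: "f (j + 2) \<le> real (p choose (j + 2)) * ((B ^ p + S) * B * N ^ r)" if "j \<le> r" for j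
    proof -
      have e: "p - (j + 2) = r - j" unfolding p by simp
      have "m ^ (r - j) \<le> (B * N) ^ (r - j)" using m by (intro power_mono) auto
      also have "\<dots> = B ^ (r - j) * N ^ (r - j)" by (simp add: power_mult_distrib)
      also have "\<dots> \<le> B ^ p * N ^ r"
        using B N that by (intro mult_mono power_increasing) (auto simp: p)
      finally have a1: "m ^ (r - j) \<le> B ^ p * N ^ r" .
      have "DD B (r - j) * N ^ (r - j - 1) \<le> S * N ^ r"
        using that B N S0 by (intro mult_mono DDle Npow) (auto intro: DD_nonneg)
      with a1 have "m ^ (r - j) + DD B (r - j) * N ^ (r - j - 1) \<le> (B ^ p + S) * N ^ r"
        by (simp add: algebra_simps)
      then have "(m ^ (r - j) + DD B (r - j) * N ^ (r - j - 1)) * B \<le> ((B ^ p + S) * N ^ r) * B"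
        using B by (intro mult_right_mono) auto
      then have "real (p choose (j + 2)) * ((m ^ (r - j) + DD B (r - j) * N ^ (r - j - 1)) * B)
         \<le> real (p choose (j + 2)) * (((B ^ p + S) * N ^ r) * B)"
        by (intro mult_left_mono) auto
      then show ?thesis unfolding f_def e by (simp add: algebra_simps)
    qed
    have tail: "(\<Sum>j\<le>r. f (j + 2)) \<le> 2 ^ p * ((B ^ p + S) * B * N ^ r)"
    proof -
      have "(\<Sum>j\<le>r. f (j + 2)) \<le> (\<Sum>j\<le>r. real (p choose (j + 2)) * ((B ^ p + S) * B * N ^ r))"
        by (intro sum_mono ftail) auto
      also have "\<dots> = (\<Sum>j\<le>r. real (p choose (j + 2))) * ((B ^ p + S) * B * N ^ r)"
        by (simp add: sum_distrib_right)
      also have "\<dots> \<le> 2 ^ p * ((B ^ p + S) * B * N ^ r)"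
        using choose_tail[of r] B N S0 unfolding p by (intro mult_right_mono) auto
      finally show ?thesis .
    qed
    have f1b: "real p * DD B (Suc r) * N ^ r * mi \<le> 2 ^ p * S * B * N ^ r"
    proof -
      have "p < 2 ^ p" by (rule less_exp)
      then have "real p \<le> 2 ^ p" by (metis less_imp_le of_nat_le_iff of_nat_numeral of_nat_power)
      then have "real p * DD B (Suc r) \<le> 2 ^ p * S"
        using DDle[of "Suc r"] S0 B DD_nonneg[of B "Suc r"] by (intro mult_mono) auto
      moreover have "mi * N ^ r \<le> B * N ^ r" using mi N by (intro mult_right_mono) auto
      ultimately have "(real p * DD B (Suc r)) * (mi * N ^ r) \<le> (2 ^ p * S) * (B * N ^ r)"
        by (rule mult_mono) (use mi N S0 in auto)
      then show ?thesis by (simp add: algebra_simps)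
    qed
    have bern: "m ^ p + real p * m ^ Suc r * mi \<le> (m + mi) ^ p"
      using bern2[OF m(1) mi(1), of "Suc r"] unfolding p by simp
    have Np: "N ^ Suc r + N ^ r \<le> (N + 1) ^ Suc r"
    proof -
      have "(N + 1) * N ^ r \<le> (N + 1) * (N + 1) ^ r"
        using N by (intro mult_left_mono power_mono) auto
      then show ?thesis by (simp add: algebra_simps)
    qed
    have K: "2 ^ p * S * B + 2 ^ p * ((B ^ p + S) * B) \<le> DD B p"
    proof -
      have Bp: "B \<le> B ^ Suc (Suc (Suc r))" using power_increasing[of 1 "Suc (Suc (Suc r))" B] B by simp
      have "2 ^ p * S * B + 2 ^ p * ((B ^ p + S) * B) = 2 ^ p * (B ^ p * B + 2 * S * B)"
        by (simp add: algebra_simps)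
      also have "\<dots> \<le> 2 ^ p * (B ^ Suc (Suc (Suc r)) * 2 * (1 + S))"
      proof -
        have "B ^ p * B = B ^ Suc (Suc (Suc r))" by (simp add: p)
        moreover have "2 * S * B \<le> 2 * S * B ^ Suc (Suc (Suc r))" using S0 Bp by (intro mult_left_mono) auto
        moreover have "0 \<le> B ^ Suc (Suc (Suc r))" using B by simp
        ultimately show ?thesis by (intro mult_left_mono) (auto simp: algebra_simps)
      qed
      also have "\<dots> = (2 * 2 ^ p) * B ^ Suc (Suc (Suc r)) * (1 + S)" by (simp add: algebra_simps)
      also have "\<dots> \<le> 4 ^ Suc (Suc r) * B ^ (Suc r + 2) * (1 + S)"
      proof -
        have "(2::real) * 2 ^ p = 2 ^ Suc p" by simp
        also have "\<dots> \<le> 2 ^ (2 * Suc (Suc r))" by (rule power_increasing) (auto simp: p)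
        also have "\<dots> = 4 ^ Suc (Suc r)" by (simp add: power_mult)
        finally have "(2::real) * 2 ^ p \<le> 4 ^ Suc (Suc r)" .
        then show ?thesis using B S0 by (intro mult_right_mono) auto
      qed
      finally show ?thesis using DDp by simp
    qed
    have "(\<Sum>j\<le>p. f j) \<le> (m ^ p + DD B p * N ^ Suc r) + (real p * m ^ Suc r * mi + 2 ^ p * S * B * N ^ r)
                           + 2 ^ p * ((B ^ p + S) * B * N ^ r)"
      using split f0 f1 f1b tail by linarith
    also have "\<dots> = (m ^ p + real p * m ^ Suc r * mi) + DD B p * N ^ Suc r
                      + (2 ^ p * S * B + 2 ^ p * ((B ^ p + S) * B)) * N ^ r"
      by (simp add: algebra_simps)
    also have "\<dots> \<le> (m + mi) ^ p + DD B p * N ^ Suc r + DD B p * N ^ r"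
      using bern K N by (intro add_mono mult_right_mono) auto
    also have "\<dots> \<le> (m + mi) ^ p + DD B p * (N + 1) ^ (p - 1)"
    proof -
      have "DD B p * N ^ Suc r + DD B p * N ^ r = DD B p * (N ^ Suc r + N ^ r)" by (simp add: algebra_simps)
      also have "\<dots> \<le> DD B p * (N + 1) ^ Suc r"
        by (rule mult_left_mono[OF Np DD_nonneg]) (use B in auto)
      finally show ?thesis by (simp add: p)
    qed
    finally show ?thesis unfolding f_def .
  qed
qed




context gwl begin

definition V :: "((nat \<times> nat \<times> nat) + nat) \<Rightarrow> 'a \<Rightarrow> real" where
  "V i \<omega> = real (fst (fam i \<omega>) + snd (fam i \<omega>))"

lemma V_meas: "i \<in> K \<Longrightarrow> V i \<in> borel_measurable (Sig K)"
  unfolding V_def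
  by (rule measurable_compose[OF fam_meas[of i K], where g="\<lambda>v. real (fst v + snd v)"]) auto

lemma V_nonneg: "0 \<le> V i \<omega>" unfolding V_def by simp

lemma Jlemma:
  assumes B: "1 \<le> B" and c: "0 \<le> c" "c \<le> B"
    and mean: "\<And>i. i \<in> gwi_index \<Longrightarrow> (\<integral>\<^sup>+\<omega>. ennreal (V i \<omega>) \<partial>M) = ennreal (mu i)"
    and mub: "\<And>i. i \<in> gwi_index \<Longrightarrow> 0 \<le> mu i \<and> mu i \<le> B"
    and mom: "\<And>i q. i \<in> gwi_index \<Longrightarrow> 2 \<le> q \<Longrightarrow> q \<le> l \<Longrightarrow> (\<integral>\<^sup>+\<omega>. ennreal (V i \<omega> ^ q) \<partial>M) \<le> ennreal B"
    and J: "finite J" "J \<subseteq> gwi_index"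
  shows "\<forall>p\<le>l. (\<integral>\<^sup>+\<omega>. ennreal ((c + (\<Sum>i\<in>J. V i \<omega>)) ^ p) \<partial>M)
            \<le> ennreal ((c + (\<Sum>i\<in>J. mu i)) ^ p + DD B p * (1 + c + real (card J)) ^ (p - 1))"
  using J
proof (induction J rule: finite_induct)
  case empty
  show ?case
  proof safe
    fix p
    have "(\<integral>\<^sup>+\<omega>. ennreal ((c + (\<Sum>i\<in>{}. V i \<omega>)) ^ p) \<partial>M) = ennreal (c ^ p)"
      by (simp add: emeasure_space_1)
    also have "\<dots> \<le> ennreal ((c + (\<Sum>i\<in>{}. mu i)) ^ p + DD B p * (1 + c + real (card {})) ^ (p - 1))"
      using DD_nonneg[of B p] B c by (intro ennreal_leI) simp
    finally show "(\<integral>\<^sup>+\<omega>. ennreal ((c + (\<Sum>i\<in>{}. V i \<omega>)) ^ p) \<partial>M)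
      \<le> ennreal ((c + (\<Sum>i\<in>{}. mu i)) ^ p + DD B p * (1 + c + real (card {})) ^ (p - 1))" .
  qed
next
  case (insert i J)
  have iI: "i \<in> gwi_index" and JI: "J \<subseteq> gwi_index" using insert by auto
  define m where "m = c + (\<Sum>j\<in>J. mu j)"
  define N where "N = 1 + c + real (card J)"
  define a :: "nat \<Rightarrow> real" where "a q = m ^ q + DD B q * N ^ (q - 1)" for q
  define b :: "nat \<Rightarrow> real" where "b j = (if j = 0 then 1 else if j = 1 then mu i else B)" for j
  have mpos: "0 \<le> m" unfolding m_def using c mub JI by (auto intro!: sum_nonneg add_nonneg_nonneg)
  have N1: "1 \<le> N" unfolding N_def using c by simp
  have mB: "m \<le> B * N"
  proof -
    have "(\<Sum>j\<in>J. mu j) \<le> (\<Sum>j\<in>J. B)" using mub JI by (intro sum_mono) auto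
    also have "\<dots> = B * real (card J)" by simp
    finally have "(\<Sum>j\<in>J. mu j) \<le> B * real (card J)" .
    moreover have "c \<le> B * c" using B c by (simp add: mult_le_cancel_right1)
    moreover have "0 \<le> B" using B by simp
    ultimately show ?thesis unfolding m_def N_def by (simp add: algebra_simps)
  qed
  show ?case
  proof safe
    fix p assume pl: "p \<le> l"
    have eqs: "c + (\<Sum>j\<in>insert i J. V j \<omega>) = (c + (\<Sum>j\<in>J. V j \<omega>)) + V i \<omega>" for \<omega>
      using insert by simp
    have "(\<integral>\<^sup>+\<omega>. ennreal ((c + (\<Sum>j\<in>insert i J. V j \<omega>)) ^ p) \<partial>M)
        = (\<integral>\<^sup>+\<omega>. ennreal (((c + (\<Sum>j\<in>J. V j \<omega>)) + V i \<omega>) ^ p) \<partial>M)"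
      unfolding eqs ..
    also have "\<dots> \<le> ennreal (\<Sum>j\<le>p. real (p choose j) * a (p - j) * b j)"
    proof (rule binom_bound[of J "{i}"])
      show "J \<subseteq> gwi_index" "{i} \<subseteq> gwi_index" "J \<inter> {i} = {}" using insert by auto
      show "(\<lambda>\<omega>. c + (\<Sum>j\<in>J. V j \<omega>)) \<in> borel_measurable (Sig J)"
        by (intro borel_measurable_add borel_measurable_const borel_measurable_sum V_meas)
      show "V i \<in> borel_measurable (Sig {i})" by (rule V_meas) simp
      show "0 \<le> c + (\<Sum>j\<in>J. V j \<omega>)" for \<omega> using c V_nonneg by (simp add: sum_nonneg)
      show "0 \<le> V i \<omega>" for \<omega> by (rule V_nonneg)
      show "(\<integral>\<^sup>+\<omega>. ennreal ((c + (\<Sum>j\<in>J. V j \<omega>)) ^ q) \<partial>M) \<le> ennreal (a q)" if "q \<le> p" for q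
        using insert.IH[OF JI] that pl unfolding a_def m_def N_def by auto
      show "(\<integral>\<^sup>+\<omega>. ennreal (V i \<omega> ^ j) \<partial>M) \<le> ennreal (b j)" if "j \<le> p" for j
      proof -
        consider "j = 0" | "j = 1" | "2 \<le> j" by linarith
        then show ?thesis
        proof cases
          case 1 then show ?thesis by (simp add: b_def emeasure_space_1)
        next
          case 2 then show ?thesis using mean[OF iI] by (simp add: b_def)
        next
          case 3 then show ?thesis using mom[OF iI 3] that pl by (simp add: b_def)
        qed
      qed
      show "0 \<le> a q" for q unfolding a_def using mpos N1 DD_nonneg[of B q] B by simp
      show "0 \<le> b q" for q unfolding b_def using mub[OF iI] B by simp
    qed
    also have "\<dots> \<le> ennreal ((m + mu i) ^ p + DD B p * (N + 1) ^ (p - 1))"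
      unfolding a_def b_def
      by (intro ennreal_leI step_ineq B mpos mB N1) (use mub[OF iI] in auto)
    also have "\<dots> = ennreal ((c + (\<Sum>j\<in>insert i J. mu j)) ^ p + DD B p * (1 + c + real (card (insert i J))) ^ (p - 1))"
      using insert by (simp add: m_def N_def algebra_simps)
    finally show "(\<integral>\<^sup>+\<omega>. ennreal ((c + (\<Sum>j\<in>insert i J. V j \<omega>)) ^ p) \<partial>M)
       \<le> ennreal ((c + (\<Sum>j\<in>insert i J. mu j)) ^ p + DD B p * (1 + c + real (card (insert i J))) ^ (p - 1))" .
  qed
qed

end



definition gen :: "((nat \<times> nat \<times> nat) + nat) \<Rightarrow> nat" where
  "gen x = (case x of Inl t \<Rightarrow> fst t | Inr k \<Rightarrow> k)"

lemma gen_simps[simp]: "gen (Inl (k, j, i)) = k" "gen (Inr k) = k" by (simp_all add: gen_def)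

lemma idx_Inl[simp]: "Inl (k, j, i) \<in> gwi_index \<longleftrightarrow> 1 \<le> k \<and> 1 \<le> j \<and> (i = 1 \<or> i = 2)"
  by (auto simp: gwi_index_def)
lemma idx_Inr[simp]: "Inr k \<in> gwi_index \<longleftrightarrow> 1 \<le> k"
  by (auto simp: gwi_index_def)

definition Jset :: "nat \<Rightarrow> nat \<times> nat \<Rightarrow> ((nat \<times> nat \<times> nat) + nat) set" where
  "Jset k n = (\<lambda>j. Inl (k, j, 1)) ` {1..fst n} \<union> (\<lambda>j. Inl (k, j, 2)) ` {1..snd n} \<union> {Inr k}"

lemma Jset_finite: "finite (Jset k n)" by (simp add: Jset_def)

lemma Jsum: "(\<Sum>i\<in>Jset k n. f i) = (\<Sum>j\<in>{1..fst n}. f (Inl (k, j, 1))) + (\<Sum>j\<in>{1..snd n}. f (Inl (k, j, 2))) + f (Inr k)"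
proof -
  have d1: "(\<lambda>j. Inl (k, j, 1::nat)) ` {1..fst n} \<inter> (\<lambda>j. Inl (k, j, 2::nat)) ` {1..snd n} = ({} :: ((nat \<times> nat \<times> nat) + nat) set)" by auto
  have "(\<Sum>i\<in>Jset k n. f i) = (\<Sum>i\<in>(\<lambda>j. Inl (k, j, 1)) ` {1..fst n} \<union> (\<lambda>j. Inl (k, j, 2)) ` {1..snd n}. f i) + f (Inr k)"
    unfolding Jset_def by (subst sum.union_disjoint) auto
  also have "(\<Sum>i\<in>(\<lambda>j. Inl (k, j, 1)) ` {1..fst n} \<union> (\<lambda>j. Inl (k, j, 2)) ` {1..snd n}. f i)
     = (\<Sum>i\<in>(\<lambda>j. Inl (k, j, 1)) ` {1..fst n}. f i) + (\<Sum>i\<in>(\<lambda>j. Inl (k, j, 2)) ` {1..snd n}. f i)"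
    by (rule sum.union_disjoint) (use d1 in auto)
  also have "(\<Sum>i\<in>(\<lambda>j. Inl (k, j, 1)) ` {1..fst n}. f i) = (\<Sum>j\<in>{1..fst n}. f (Inl (k, j, 1)))"
    by (subst sum.reindex) (auto simp: inj_on_def)
  also have "(\<Sum>i\<in>(\<lambda>j. Inl (k, j, 2)) ` {1..snd n}. f i) = (\<Sum>j\<in>{1..snd n}. f (Inl (k, j, 2)))"
    by (subst sum.reindex) (auto simp: inj_on_def)
  finally show ?thesis .
qed

lemma Jcard: "card (Jset k n) = fst n + snd n + 1"
  using Jsum[of "\<lambda>_. 1::nat" k n] by simp

definition step :: "(nat \<Rightarrow> nat \<Rightarrow> nat \<Rightarrow> 'a \<Rightarrow> nat \<times> nat) \<Rightarrow> (nat \<Rightarrow> 'a \<Rightarrow> nat \<times> nat)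
            \<Rightarrow> nat \<Rightarrow> nat \<times> nat \<Rightarrow> 'a \<Rightarrow> nat \<times> nat" where
  "step xi eps k n \<omega> =
     ((\<Sum>j\<in>{1..fst n}. fst (xi k j 1 \<omega>)) + (\<Sum>j\<in>{1..snd n}. fst (xi k j 2 \<omega>)) + fst (eps k \<omega>),
      (\<Sum>j\<in>{1..fst n}. snd (xi k j 1 \<omega>)) + (\<Sum>j\<in>{1..snd n}. snd (xi k j 2 \<omega>)) + snd (eps k \<omega>))"

lemma gwi_Suc: "gwi xi eps (Suc k) \<omega> = step xi eps (Suc k) (gwi xi eps k \<omega>) \<omega>"
  by (simp add: step_def)

lemma cnt_plus:
  assumes "f \<in> measurable N (count_space UNIV)" "g \<in> measurable N (count_space UNIV)"
  shows "(\<lambda>x. (f x :: nat) + g x) \<in> measurable N (count_space UNIV)"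
proof -
  have "(\<lambda>x. (\<lambda>y. y + g x) (f x)) \<in> measurable N (count_space UNIV)"
  proof (rule measurable_compose_countable[where f="\<lambda>y x. y + g x"])
    fix y :: nat
    show "(\<lambda>x. y + g x) \<in> measurable N (count_space UNIV)"
      by (rule measurable_compose[OF assms(2)]) simp
  qed (rule assms(1))
  then show ?thesis by simp
qed

lemma cnt_sum:
  assumes "finite S" "\<And>i. i \<in> S \<Longrightarrow> f i \<in> measurable N (count_space UNIV)"
  shows "(\<lambda>x. \<Sum>i\<in>S. (f i x :: nat)) \<in> measurable N (count_space UNIV)"
  using assms by (induction S rule: finite_induct) (auto intro!: cnt_plus)

lemma cnt_pair:
  assumes "f \<in> measurable N (count_space UNIV)" "g \<in> measurable N (count_space UNIV)"
  shows "(\<lambda>x. ((f x :: nat), (g x :: nat))) \<in> measurable N (count_space UNIV)"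
proof -
  have "(\<lambda>x. (\<lambda>y. (y, g x)) (f x)) \<in> measurable N (count_space UNIV)"
  proof (rule measurable_compose_countable[where f="\<lambda>y x. (y, g x)"])
    fix y :: nat
    show "(\<lambda>x. (y, g x)) \<in> measurable N (count_space UNIV)"
      by (rule measurable_compose[OF assms(2)]) simp
  qed (rule assms(1))
  then show ?thesis by simp
qed

context gwl begin

definition Kb :: "nat \<Rightarrow> ((nat \<times> nat \<times> nat) + nat) set" where
  "Kb k = {x \<in> gwi_index. gen x \<le> k}"
definition Kk :: "nat \<Rightarrow> ((nat \<times> nat \<times> nat) + nat) set" where
  "Kk k = {x \<in> gwi_index. gen x = k}"

lemma fam_Inl[simp]: "fam (Inl (k, j, i)) = xi k j i" by (simp add: gwi_family_def)
lemma fam_Inr[simp]: "fam (Inr k) = eps k" by (simp add: gwi_family_def)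

lemma Jset_Kk: "1 \<le> k \<Longrightarrow> Jset k n \<subseteq> Kk k"
  by (auto simp: Jset_def Kk_def)

lemma Jset_idx: "1 \<le> k \<Longrightarrow> Jset k n \<subseteq> gwi_index"
  by (auto simp: Jset_def)

lemma step_meas:
  assumes "1 \<le> k" "k \<le> k'"
  shows "step xi eps k n \<in> measurable (Sig (Kb k')) (count_space UNIV)"
proof -
  have x: "xi k j i \<in> measurable (Sig (Kb k')) (count_space UNIV)" if "1 \<le> j" "i = 1 \<or> i = 2" for j i
    using fam_meas[of "Inl (k, j, i)" "Kb k'"] assms that by (auto simp: Kb_def)
  have e: "eps k \<in> measurable (Sig (Kb k')) (count_space UNIV)"
    using fam_meas[of "Inr k" "Kb k'"] assms by (auto simp: Kb_def)
  have xf: "(\<lambda>\<omega>. fst (xi k j i \<omega>)) \<in> measurable (Sig (Kb k')) (count_space UNIV)"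
       "(\<lambda>\<omega>. snd (xi k j i \<omega>)) \<in> measurable (Sig (Kb k')) (count_space UNIV)"
    if "1 \<le> j" "i = 1 \<or> i = 2" for j i
    using measurable_compose[OF x[OF that], of fst "count_space UNIV"]
          measurable_compose[OF x[OF that], of snd "count_space UNIV"] by auto
  have ef: "(\<lambda>\<omega>. fst (eps k \<omega>)) \<in> measurable (Sig (Kb k')) (count_space UNIV)"
       "(\<lambda>\<omega>. snd (eps k \<omega>)) \<in> measurable (Sig (Kb k')) (count_space UNIV)"
    using measurable_compose[OF e, of fst "count_space UNIV"]
          measurable_compose[OF e, of snd "count_space UNIV"] by auto
  show ?thesis unfolding step_def
    by (intro cnt_pair cnt_plus cnt_sum xf ef) auto
qed

lemma gwi_meas: "gwi xi eps k \<in> measurable (Sig (Kb k)) (count_space UNIV)"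
proof (induction k)
  case 0 then show ?case by simp
next
  case (Suc k)
  have "gwi xi eps k \<in> measurable (Sig (Kb (Suc k))) (count_space UNIV)"
    by (rule Sig_mono[OF _ Suc]) (auto simp: Kb_def)
  then have "(\<lambda>\<omega>. step xi eps (Suc k) (gwi xi eps k \<omega>) \<omega>) \<in> measurable (Sig (Kb (Suc k))) (count_space UNIV)"
  proof -
    have m1: "(\<lambda>\<omega>. step xi eps (Suc k) n \<omega>) \<in> measurable (Sig (Kb (Suc k))) (count_space UNIV)" for n
      by (rule step_meas) auto
    show ?thesis by (rule measurable_compose_countable[OF m1]) fact
  qed
  then show ?case by (simp only: gwi_Suc)
qed

lemma Kb_idx: "Kb k \<subseteq> gwi_index" by (auto simp: Kb_def)
lemma Kk_idx: "Kk k \<subseteq> gwi_index" by (auto simp: Kk_def)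
lemma Kb_Kk: "Kb k \<inter> Kk (Suc k) = {}" by (auto simp: Kb_def Kk_def)

lemma gwi_measM: "gwi xi eps k \<in> measurable M (count_space UNIV)"
  by (rule Sig_meas_M[OF Kb_idx gwi_meas])

lemma decomp:
  fixes X :: "'a \<Rightarrow> nat \<times> nat" and G :: "nat \<times> nat \<Rightarrow> 'a \<Rightarrow> ennreal"
  assumes X: "X \<in> measurable M (count_space UNIV)" and G: "\<And>n. G n \<in> borel_measurable M"
  shows "(\<integral>\<^sup>+\<omega>. G (X \<omega>) \<omega> \<partial>M) = (\<Sum>t. \<integral>\<^sup>+\<omega>. indicator {prod_decode t} (X \<omega>) * G (prod_decode t) \<omega> \<partial>M)"
proof -
  have pt: "G (X \<omega>) \<omega> = (\<Sum>t. indicator {prod_decode t} (X \<omega>) * G (prod_decode t) \<omega>)" for \<omega>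
  proof -
    have "(\<Sum>t. indicator {prod_decode t} (X \<omega>) * G (prod_decode t) \<omega>)
        = (\<Sum>t\<in>{prod_encode (X \<omega>)}. indicator {prod_decode t} (X \<omega>) * G (prod_decode t) \<omega>)"
    proof (rule suminf_finite)
      fix t assume "t \<notin> {prod_encode (X \<omega>)}"
      then have "prod_decode t \<noteq> X \<omega>" by (metis prod_decode_inverse singletonI)
      then show "indicator {prod_decode t} (X \<omega>) * G (prod_decode t) \<omega> = 0" by simp
    qed simp
    then show ?thesis by simp
  qed
  have m: "(\<lambda>\<omega>. indicator {prod_decode t} (X \<omega>) * G (prod_decode t) \<omega>) \<in> borel_measurable M" for t
    by (intro borel_measurable_times_ennreal measurable_compose[OF X] G) auto
  show ?thesis unfolding pt by (rule nn_integral_suminf[OF m])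
qed

lemma cond:
  fixes h :: "nat \<times> nat \<Rightarrow> 'a \<Rightarrow> ennreal"
  assumes h: "\<And>n. h n \<in> borel_measurable (Sig (Kk (Suc k)))"
  shows "(\<integral>\<^sup>+\<omega>. h (gwi xi eps k \<omega>) \<omega> \<partial>M) = (\<integral>\<^sup>+\<omega>. (\<integral>\<^sup>+\<omega>'. h (gwi xi eps k \<omega>) \<omega>' \<partial>M) \<partial>M)"
proof -
  let ?X = "gwi xi eps k"
  have hM: "h n \<in> borel_measurable M" for n by (rule Sig_meas_M[OF Kk_idx h])
  have ind: "(\<lambda>\<omega>. indicator {n} (?X \<omega>) :: ennreal) \<in> borel_measurable (Sig (Kb k))" for n
    by (rule measurable_compose[OF gwi_meas]) simp
  have "(\<integral>\<^sup>+\<omega>. h (?X \<omega>) \<omega> \<partial>M) = (\<Sum>t. \<integral>\<^sup>+\<omega>. indicator {prod_decode t} (?X \<omega>) * h (prod_decode t) \<omega> \<partial>M)"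
    by (rule decomp[OF gwi_measM hM])
  also have "\<dots> = (\<Sum>t. \<integral>\<^sup>+\<omega>. indicator {prod_decode t} (?X \<omega>) * (\<integral>\<^sup>+\<omega>'. h (prod_decode t) \<omega>' \<partial>M) \<partial>M)"
  proof (intro suminf_cong)
    fix t
    have "(\<integral>\<^sup>+\<omega>. indicator {prod_decode t} (?X \<omega>) * h (prod_decode t) \<omega> \<partial>M)
       = (\<integral>\<^sup>+\<omega>. indicator {prod_decode t} (?X \<omega>) \<partial>M) * (\<integral>\<^sup>+\<omega>'. h (prod_decode t) \<omega>' \<partial>M)"
      by (rule indep_prod[OF Kb_idx Kk_idx Kb_Kk ind h])
    also have "\<dots> = (\<integral>\<^sup>+\<omega>. indicator {prod_decode t} (?X \<omega>) * (\<integral>\<^sup>+\<omega>'. h (prod_decode t) \<omega>' \<partial>M) \<partial>M)"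
      by (rule nn_integral_multc[symmetric]) (rule Sig_meas_M[OF Kb_idx ind])
    finally show "(\<integral>\<^sup>+\<omega>. indicator {prod_decode t} (?X \<omega>) * h (prod_decode t) \<omega> \<partial>M)
       = (\<integral>\<^sup>+\<omega>. indicator {prod_decode t} (?X \<omega>) * (\<integral>\<^sup>+\<omega>'. h (prod_decode t) \<omega>' \<partial>M) \<partial>M)" .
  qed
  also have "\<dots> = (\<integral>\<^sup>+\<omega>. (\<integral>\<^sup>+\<omega>'. h (?X \<omega>) \<omega>' \<partial>M) \<partial>M)"
    by (rule decomp[OF gwi_measM, symmetric]) simp
  finally show ?thesis .
qed

end



lemma powbound1:
  fixes x \<mu> :: real
  assumes x: "1 \<le> x" and mu: "0 \<le> \<mu>"
  shows "(x + \<mu>) ^ p \<le> x ^ p + (2 + \<mu>) ^ p * x ^ (p - 1)"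
proof (induction p)
  case 0 then show ?case by simp
next
  case (Suc q)
  show ?case
  proof (cases q)
    case 0 then show ?thesis by simp
  next
    case (Suc r)
    define A where "A = (2 + \<mu>) ^ q"
    have A: "\<mu> \<le> A" "0 \<le> A"
    proof -
      have "(2 + \<mu>) ^ 1 \<le> (2 + \<mu>) ^ q" using mu Suc by (intro power_increasing) auto
      then have "2 + \<mu> \<le> (2 + \<mu>) ^ q" by simp
      then show "\<mu> \<le> A" "0 \<le> A" using mu unfolding A_def by auto
    qed
    have IH: "(x + \<mu>) ^ q \<le> x ^ q + A * x ^ r" using Suc.IH unfolding A_def Suc by simp
    have "(x + \<mu>) ^ Suc q = (x + \<mu>) * (x + \<mu>) ^ q" by simp
    also have "\<dots> \<le> (x + \<mu>) * (x ^ q + A * x ^ r)" using IH x mu by (intro mult_left_mono) auto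
    also have "\<dots> = x ^ Suc q + \<mu> * x ^ q + A * x ^ q + A * \<mu> * x ^ r"
      unfolding Suc by (simp add: algebra_simps)
    also have "\<dots> \<le> x ^ Suc q + \<mu> * x ^ q + A * x ^ q + A * \<mu> * x ^ q"
    proof -
      have "x ^ r \<le> x ^ q" using x Suc by (intro power_increasing) auto
      then show ?thesis using A mu by (simp add: mult_left_mono)
    qed
    also have "\<dots> = x ^ Suc q + (\<mu> + A * (1 + \<mu>)) * x ^ q" by (simp add: algebra_simps)
    also have "\<dots> \<le> x ^ Suc q + (2 + \<mu>) ^ Suc q * x ^ q"
    proof -
      have "\<mu> + A * (1 + \<mu>) \<le> (2 + \<mu>) ^ Suc q" using A unfolding A_def by (simp add: algebra_simps)
      then show ?thesis using x by (intro add_left_mono mult_right_mono) auto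
    qed
    finally show ?thesis by simp
  qed
qed

lemma powbound2:
  fixes x :: real assumes "1 \<le> x" shows "(x + 2) ^ r \<le> 3 ^ r * x ^ r"
proof -
  have "(x + 2) ^ r \<le> (3 * x) ^ r" using assms by (intro power_mono) auto
  then show ?thesis by (simp add: power_mult_distrib)
qed

locale gwm = gwl M xi eps for M :: "'a measure" and xi eps +
  fixes B \<mu> :: real and l :: nat
  assumes B1: "1 \<le> B" and mu0: "0 \<le> \<mu>" and muB: "\<mu> \<le> B"
    and meanI: "\<And>i. i \<in> gwi_index \<Longrightarrow> (\<integral>\<^sup>+\<omega>. ennreal (V i \<omega>) \<partial>M)
                   = ennreal (case i of Inl _ \<Rightarrow> 1 | Inr _ \<Rightarrow> \<mu>)"
    and momI: "\<And>i q. i \<in> gwi_index \<Longrightarrow> 2 \<le> q \<Longrightarrow> q \<le> l \<Longrightarrow> (\<integral>\<^sup>+\<omega>. ennreal (V i \<omega> ^ q) \<partial>M) \<le> ennreal B"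
begin

definition T :: "nat \<Rightarrow> 'a \<Rightarrow> real" where
  "T k \<omega> = 1 + real (fst (gwi xi eps k \<omega>) + snd (gwi xi eps k \<omega>))"

lemma T_ge1: "1 \<le> T k \<omega>" unfolding T_def by simp

lemma T_meas: "T k \<in> borel_measurable M"
  unfolding T_def
  by (rule measurable_compose[OF gwi_measM, where g="\<lambda>v. 1 + real (fst v + snd v)"]) simp

lemma tot_step: "real (fst (step xi eps k n \<omega>) + snd (step xi eps k n \<omega>)) = (\<Sum>i\<in>Jset k n. V i \<omega>)"
  unfolding Jsum by (simp add: step_def V_def sum.distrib)

lemma mu_sum: "(\<Sum>i\<in>Jset k n. (case i of Inl _ \<Rightarrow> 1 | Inr _ \<Rightarrow> \<mu>)) = real (fst n + snd n) + \<mu>"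
  unfolding Jsum by simp

lemma JL:
  assumes "finite J" "J \<subseteq> gwi_index"
  shows "\<forall>p\<le>l. (\<integral>\<^sup>+\<omega>. ennreal ((1 + (\<Sum>i\<in>J. V i \<omega>)) ^ p) \<partial>M)
            \<le> ennreal ((1 + (\<Sum>i\<in>J. (case i of Inl _ \<Rightarrow> 1 | Inr _ \<Rightarrow> \<mu>))) ^ p + DD B p * (1 + 1 + real (card J)) ^ (p - 1))"
proof (rule Jlemma)
  show "1 \<le> B" "0 \<le> (1::real)" "1 \<le> B" using B1 by auto
  show "\<And>i. i \<in> gwi_index \<Longrightarrow> (\<integral>\<^sup>+\<omega>. ennreal (V i \<omega>) \<partial>M) = ennreal (case i of Inl _ \<Rightarrow> 1 | Inr _ \<Rightarrow> \<mu>)"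
    by (rule meanI)
  show "0 \<le> (case i of Inl _ \<Rightarrow> 1 | Inr _ \<Rightarrow> \<mu>) \<and> (case i of Inl _ \<Rightarrow> 1 | Inr _ \<Rightarrow> \<mu>) \<le> B" for i
    using B1 mu0 muB by (cases i) auto
  show "\<And>i q. i \<in> gwi_index \<Longrightarrow> 2 \<le> q \<Longrightarrow> q \<le> l \<Longrightarrow> (\<integral>\<^sup>+\<omega>. ennreal (V i \<omega> ^ q) \<partial>M) \<le> ennreal B"
    by (rule momI)
qed (use assms in auto)

lemma rec:
  assumes pl: "p \<le> l"
  shows "(\<integral>\<^sup>+\<omega>. ennreal (T (Suc k) \<omega> ^ p) \<partial>M)
     \<le> (\<integral>\<^sup>+\<omega>. ennreal (T k \<omega> ^ p) \<partial>M)
        + ennreal ((2 + \<mu>) ^ p + DD B p * 3 ^ (p - 1)) * (\<integral>\<^sup>+\<omega>. ennreal (T k \<omega> ^ (p - 1)) \<partial>M)"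
proof -
  define K where "K = (2 + \<mu>) ^ p + DD B p * 3 ^ (p - 1)"
  have K0: "0 \<le> K" unfolding K_def using mu0 DD_nonneg[of B p] B1 by simp
  define h where "h n \<omega> = ennreal ((1 + (\<Sum>i\<in>Jset (Suc k) n. V i \<omega>)) ^ p)" for n \<omega>
  have hm: "h n \<in> borel_measurable (Sig (Kk (Suc k)))" for n
  proof -
    have "(\<lambda>\<omega>. \<Sum>i\<in>Jset (Suc k) n. V i \<omega>) \<in> borel_measurable (Sig (Jset (Suc k) n))"
      by (intro borel_measurable_sum V_meas)
    then have "h n \<in> borel_measurable (Sig (Jset (Suc k) n))"
      unfolding h_def by measurable
    then show ?thesis by (rule Sig_mono[rotated]) (rule Jset_Kk, simp)
  qed
  have eqT: "ennreal (T (Suc k) \<omega> ^ p) = h (gwi xi eps k \<omega>) \<omega>" for \<omega>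
    unfolding h_def T_def gwi_Suc tot_step[symmetric] by simp
  have Hb: "(\<integral>\<^sup>+\<omega>'. h n \<omega>' \<partial>M) \<le> ennreal ((1 + real (fst n + snd n)) ^ p + K * (1 + real (fst n + snd n)) ^ (p - 1))" for n
  proof -
    define x where "x = 1 + real (fst n + snd n)"
    have x1: "1 \<le> x" unfolding x_def by simp
    have "(\<integral>\<^sup>+\<omega>'. h n \<omega>' \<partial>M) \<le> ennreal ((1 + (\<Sum>i\<in>Jset (Suc k) n. (case i of Inl _ \<Rightarrow> 1 | Inr _ \<Rightarrow> \<mu>))) ^ p
          + DD B p * (1 + 1 + real (card (Jset (Suc k) n))) ^ (p - 1))"
      unfolding h_def using JL[of "Jset (Suc k) n"] Jset_finite Jset_idx[of "Suc k" n] pl by simp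
    also have "\<dots> = ennreal ((x + \<mu>) ^ p + DD B p * (x + 2) ^ (p - 1))"
      unfolding mu_sum Jcard x_def by (simp add: algebra_simps)
    also have "\<dots> \<le> ennreal (x ^ p + K * x ^ (p - 1))"
    proof (rule ennreal_leI)
      have "(x + \<mu>) ^ p \<le> x ^ p + (2 + \<mu>) ^ p * x ^ (p - 1)" by (rule powbound1[OF x1 mu0])
      moreover have "DD B p * (x + 2) ^ (p - 1) \<le> DD B p * (3 ^ (p - 1) * x ^ (p - 1))"
        using DD_nonneg[of B p] B1 powbound2[OF x1] by (intro mult_left_mono) auto
      ultimately show "(x + \<mu>) ^ p + DD B p * (x + 2) ^ (p - 1) \<le> x ^ p + K * x ^ (p - 1)"
        unfolding K_def by (simp add: algebra_simps)
    qed
    finally show ?thesis unfolding x_def .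
  qed
  have "(\<integral>\<^sup>+\<omega>. ennreal (T (Suc k) \<omega> ^ p) \<partial>M) = (\<integral>\<^sup>+\<omega>. h (gwi xi eps k \<omega>) \<omega> \<partial>M)"
    unfolding eqT ..
  also have "\<dots> = (\<integral>\<^sup>+\<omega>. (\<integral>\<^sup>+\<omega>'. h (gwi xi eps k \<omega>) \<omega>' \<partial>M) \<partial>M)"
    by (rule cond[OF hm])
  also have "\<dots> \<le> (\<integral>\<^sup>+\<omega>. ennreal (T k \<omega> ^ p) + ennreal K * ennreal (T k \<omega> ^ (p - 1)) \<partial>M)"
  proof (rule nn_integral_mono)
    fix \<omega>
    have "(\<integral>\<^sup>+\<omega>'. h (gwi xi eps k \<omega>) \<omega>' \<partial>M) \<le> ennreal (T k \<omega> ^ p + K * T k \<omega> ^ (p - 1))"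
      using Hb[of "gwi xi eps k \<omega>"] unfolding T_def .
    also have "\<dots> = ennreal (T k \<omega> ^ p) + ennreal K * ennreal (T k \<omega> ^ (p - 1))"
      using K0 T_ge1[of k \<omega>] by (simp add: ennreal_plus ennreal_mult)
    finally show "(\<integral>\<^sup>+\<omega>'. h (gwi xi eps k \<omega>) \<omega>' \<partial>M) \<le> ennreal (T k \<omega> ^ p) + ennreal K * ennreal (T k \<omega> ^ (p - 1))" .
  qed
  also have "\<dots> = (\<integral>\<^sup>+\<omega>. ennreal (T k \<omega> ^ p) \<partial>M) + ennreal K * (\<integral>\<^sup>+\<omega>. ennreal (T k \<omega> ^ (p - 1)) \<partial>M)"
    using T_meas[of k]
    by (subst nn_integral_add) (auto intro!: nn_integral_cmult)
  finally show ?thesis unfolding K_def .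
qed

lemma T0: "T 0 \<omega> = 1" unfolding T_def by simp

lemma moments: "p \<le> l \<Longrightarrow> \<exists>C\<ge>0. \<forall>k. (\<integral>\<^sup>+\<omega>. ennreal (T k \<omega> ^ p) \<partial>M) \<le> ennreal (C * (real k + 1) ^ p)"
proof (induction p)
  case 0
  show ?case by (rule exI[of _ 1]) (simp add: emeasure_space_1)
next
  case (Suc p)
  obtain C where C0: "0 \<le> C" and C: "\<And>k. (\<integral>\<^sup>+\<omega>. ennreal (T k \<omega> ^ p) \<partial>M) \<le> ennreal (C * (real k + 1) ^ p)"
    using Suc by auto
  have pl: "Suc p \<le> l" using Suc.prems .
  define K where "K = (2 + \<mu>) ^ Suc p + DD B (Suc p) * 3 ^ p"
  have K0: "0 \<le> K" unfolding K_def using mu0 DD_nonneg[of B "Suc p"] B1 by simp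
  have claim: "(\<integral>\<^sup>+\<omega>. ennreal (T k \<omega> ^ Suc p) \<partial>M) \<le> ennreal (1 + K * C * real k * (real k + 1) ^ p)" for k
  proof (induction k)
    case 0 then show ?case by (simp add: T0 emeasure_space_1)
  next
    case (Suc k)
    have "(\<integral>\<^sup>+\<omega>. ennreal (T (Suc k) \<omega> ^ Suc p) \<partial>M)
       \<le> (\<integral>\<^sup>+\<omega>. ennreal (T k \<omega> ^ Suc p) \<partial>M) + ennreal K * (\<integral>\<^sup>+\<omega>. ennreal (T k \<omega> ^ p) \<partial>M)"
      using rec[OF pl, of k] unfolding K_def by simp
    also have "\<dots> \<le> ennreal (1 + K * C * real k * (real k + 1) ^ p) + ennreal K * ennreal (C * (real k + 1) ^ p)"
      by (intro add_mono mult_left_mono Suc.IH C) auto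
    also have "\<dots> = ennreal (1 + K * C * real k * (real k + 1) ^ p + K * (C * (real k + 1) ^ p))"
      using K0 C0 by (simp add: ennreal_plus ennreal_mult)
    also have "\<dots> \<le> ennreal (1 + K * C * real (Suc k) * (real (Suc k) + 1) ^ p)"
    proof (rule ennreal_leI)
      have "(real k + 1) ^ p \<le> (real k + 2) ^ p" by (intro power_mono) auto
      then have "K * C * (real k + 1) * (real k + 1) ^ p \<le> K * C * (real k + 1) * (real k + 2) ^ p"
        using K0 C0 by (intro mult_left_mono) auto
      then show "1 + K * C * real k * (real k + 1) ^ p + K * (C * (real k + 1) ^ p)
          \<le> 1 + K * C * real (Suc k) * (real (Suc k) + 1) ^ p"
        by (simp add: algebra_simps)
    qed
    finally show ?case .
  qed
  show ?case
  proof (intro exI[of _ "1 + K * C"] conjI allI)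
    show "0 \<le> 1 + K * C" using K0 C0 by simp
    fix k
    have "1 + K * C * real k * (real k + 1) ^ p \<le> (1 + K * C) * (real k + 1) ^ Suc p"
    proof -
      have "1 \<le> (real k + 1) ^ Suc p" by (rule one_le_power) simp
      moreover have "K * C * real k * (real k + 1) ^ p \<le> K * C * (real k + 1) ^ Suc p"
        using K0 C0 by (simp add: mult_left_mono mult_right_mono mult.assoc)
      ultimately show ?thesis by (simp add: algebra_simps)
    qed
    then show "(\<integral>\<^sup>+\<omega>. ennreal (T k \<omega> ^ Suc p) \<partial>M) \<le> ennreal ((1 + K * C) * (real k + 1) ^ Suc p)"
      using claim[of k] by (meson ennreal_leI order_trans)
  qed
qed

end




lemma tot_le_znorm: "real (fst v + snd v) \<le> 2 * znorm v"
proof -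
  have "real (fst v) \<le> znorm v" "real (snd v) \<le> znorm v"
    unfolding znorm_def norm_Pair by auto
  then show ?thesis by simp
qed

lemma znorm_le_tot: "znorm v \<le> real (fst v + snd v)"
  unfolding znorm_def using norm_Pair_le[of "real (fst v)" "real (snd v)"] by simp

lemma znorm_nonneg: "0 \<le> znorm v" unfolding znorm_def by simp

lemma pw_bound:
  assumes "q \<le> l"
  shows "real (fst v + snd v) ^ q \<le> 2 ^ l * (1 + znorm v ^ l)"
proof -
  define w where "w = 2 * znorm v"
  have w0: "0 \<le> w" unfolding w_def using znorm_nonneg by simp
  have "real (fst v + snd v) ^ q \<le> w ^ q" unfolding w_def by (intro power_mono tot_le_znorm) simp
  also have "\<dots> \<le> max 1 w ^ q" using w0 by (intro power_mono) auto
  also have "\<dots> \<le> max 1 w ^ l" using assms by (intro power_increasing) auto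
  also have "\<dots> \<le> 1 + w ^ l" using w0 by (cases "w \<le> 1") (auto simp: max_def)
  also have "\<dots> = 1 + 2 ^ l * znorm v ^ l" unfolding w_def by (simp add: power_mult_distrib)
  also have "\<dots> \<le> 2 ^ l * (1 + znorm v ^ l)" by (simp add: algebra_simps)
  finally show ?thesis .
qed

context prob_space begin

lemma gen_moment:
  fixes Y :: "'a \<Rightarrow> nat \<times> nat"
  assumes Y: "Y \<in> measurable M (count_space UNIV)" and I: "integrable M (\<lambda>\<omega>. znorm (Y \<omega>) ^ l)" and q: "q \<le> l"
  shows "(\<integral>\<^sup>+\<omega>. ennreal (real (fst (Y \<omega>) + snd (Y \<omega>)) ^ q) \<partial>M) \<le> ennreal (2 ^ l * (1 + (\<integral>\<omega>. znorm (Y \<omega>) ^ l \<partial>M)))"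
proof -
  have "(\<integral>\<^sup>+\<omega>. ennreal (real (fst (Y \<omega>) + snd (Y \<omega>)) ^ q) \<partial>M) \<le> (\<integral>\<^sup>+\<omega>. ennreal (2 ^ l * (1 + znorm (Y \<omega>) ^ l)) \<partial>M)"
    by (intro nn_integral_mono ennreal_leI pw_bound q)
  also have "\<dots> = ennreal (\<integral>\<omega>. 2 ^ l * (1 + znorm (Y \<omega>) ^ l) \<partial>M)"
    by (rule nn_integral_eq_integral) (use I znorm_nonneg in auto)
  also have "(\<integral>\<omega>. 2 ^ l * (1 + znorm (Y \<omega>) ^ l) \<partial>M) = 2 ^ l * (1 + (\<integral>\<omega>. znorm (Y \<omega>) ^ l \<partial>M))"
    using I by (simp add: prob_space)
  finally show ?thesis .
qed

lemma gen_integrable: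
  fixes Y :: "'a \<Rightarrow> nat \<times> nat"
  assumes Y: "Y \<in> measurable M (count_space UNIV)" and I: "integrable M (\<lambda>\<omega>. znorm (Y \<omega>) ^ l)" and l: "1 \<le> l"
  shows "integrable M (\<lambda>\<omega>. real (fst (Y \<omega>)))" "integrable M (\<lambda>\<omega>. real (snd (Y \<omega>)))"
proof -
  have I2: "integrable M (\<lambda>\<omega>. 2 ^ l * (1 + znorm (Y \<omega>) ^ l))" using I by simp
  have b: "real (fst (Y \<omega>) + snd (Y \<omega>)) \<le> 2 ^ l * (1 + znorm (Y \<omega>) ^ l)" for \<omega>
    using pw_bound[OF l, of "Y \<omega>"] by simp
  have nn: "0 \<le> 2 ^ l * (1 + znorm (Y \<omega>) ^ l)" for \<omega> using znorm_nonneg by simp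
  show "integrable M (\<lambda>\<omega>. real (fst (Y \<omega>)))"
  proof (rule Bochner_Integration.integrable_bound[OF I2])
    show "(\<lambda>\<omega>. real (fst (Y \<omega>))) \<in> borel_measurable M"
      by (rule measurable_compose[OF Y]) simp
    show "AE x in M. norm (real (fst (Y x))) \<le> norm (2 ^ l * (1 + znorm (Y x) ^ l))"
      using b nn by (auto intro!: always_eventually order_trans[OF _ b])
  qed
  show "integrable M (\<lambda>\<omega>. real (snd (Y \<omega>)))"
  proof (rule Bochner_Integration.integrable_bound[OF I2])
    show "(\<lambda>\<omega>. real (snd (Y \<omega>))) \<in> borel_measurable M"
      by (rule measurable_compose[OF Y]) simp
    show "AE x in M. norm (real (snd (Y x))) \<le> norm (2 ^ l * (1 + znorm (Y x) ^ l))"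
      using b nn by (auto intro!: always_eventually order_trans[OF _ b])
  qed
qed

lemma gen_mean:
  fixes Y :: "'a \<Rightarrow> nat \<times> nat"
  assumes Y: "Y \<in> measurable M (count_space UNIV)" and I: "integrable M (\<lambda>\<omega>. znorm (Y \<omega>) ^ l)" and l: "1 \<le> l"
  shows "(\<integral>\<^sup>+\<omega>. ennreal (real (fst (Y \<omega>) + snd (Y \<omega>))) \<partial>M)
     = ennreal ((\<integral>\<omega>. real (fst (Y \<omega>)) \<partial>M) + (\<integral>\<omega>. real (snd (Y \<omega>)) \<partial>M))"
proof -
  note i = gen_integrable[OF Y I l]
  have "(\<integral>\<^sup>+\<omega>. ennreal (real (fst (Y \<omega>)) + real (snd (Y \<omega>))) \<partial>M)
      = ennreal (\<integral>\<omega>. real (fst (Y \<omega>)) + real (snd (Y \<omega>)) \<partial>M)"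
    by (rule nn_integral_eq_integral) (use i in auto)
  then show ?thesis using i by simp
qed

lemma distr_nn:
  fixes f g :: "'a \<Rightarrow> 'b" and h :: "'b \<Rightarrow> ennreal"
  assumes "distr M (count_space UNIV) f = distr M (count_space UNIV) g"
    and "f \<in> measurable M (count_space UNIV)" "g \<in> measurable M (count_space UNIV)"
  shows "(\<integral>\<^sup>+\<omega>. h (f \<omega>) \<partial>M) = (\<integral>\<^sup>+\<omega>. h (g \<omega>) \<partial>M)"
proof -
  have "(\<integral>\<^sup>+\<omega>. h (f \<omega>) \<partial>M) = integral\<^sup>N (distr M (count_space UNIV) f) h"
    by (rule nn_integral_distr[symmetric]) (use assms in auto)
  also have "\<dots> = integral\<^sup>N (distr M (count_space UNIV) g) h" using assms(1) by simp
  also have "\<dots> = (\<integral>\<^sup>+\<omega>. h (g \<omega>) \<partial>M)"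
    by (rule nn_integral_distr) (use assms in auto)
  finally show ?thesis .
qed

end




theorem lemmaB6:
  fixes M :: "'a measure"
    and xi :: "nat \<Rightarrow> nat \<Rightarrow> nat \<Rightarrow> 'a \<Rightarrow> nat \<times> nat"
    and eps :: "nat \<Rightarrow> 'a \<Rightarrow> nat \<times> nat"
    and \<alpha> \<beta> :: real and l :: nat
  assumes "prob_space M"
    and indep: "prob_space.indep_vars M (\<lambda>_. count_space UNIV) (gwi_family xi eps) gwi_index"
    and id1: "\<And>k j. 1 \<le> k \<Longrightarrow> 1 \<le> j \<Longrightarrow>
               distr M (count_space UNIV) (xi k j 1) = distr M (count_space UNIV) (xi 1 1 1)"
    and id2: "\<And>k j. 1 \<le> k \<Longrightarrow> 1 \<le> j \<Longrightarrow>
               distr M (count_space UNIV) (xi k j 2) = distr M (count_space UNIV) (xi 1 1 2)"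
    and id3: "\<And>k. 1 \<le> k \<Longrightarrow>
               distr M (count_space UNIV) (eps k) = distr M (count_space UNIV) (eps 1)"
    and \<alpha>: "0 \<le> \<alpha>" "\<alpha> \<le> 1" and \<beta>: "0 \<le> \<beta>" "\<beta> \<le> 1" and sum1: "\<alpha> + \<beta> = 1"
    and mean1: "(\<integral>\<omega>. real (fst (xi 1 1 1 \<omega>)) \<partial>M) = \<alpha>"
               "(\<integral>\<omega>. real (snd (xi 1 1 1 \<omega>)) \<partial>M) = \<beta>"
    and mean2: "(\<integral>\<omega>. real (fst (xi 1 1 2 \<omega>)) \<partial>M) = \<beta>"
               "(\<integral>\<omega>. real (snd (xi 1 1 2 \<omega>)) \<partial>M) = \<alpha>"
    and l: "1 \<le> l"
    and mom1: "integrable M (\<lambda>\<omega>. znorm (xi 1 1 1 \<omega>) ^ l)"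
    and mom2: "integrable M (\<lambda>\<omega>. znorm (xi 1 1 2 \<omega>) ^ l)"
    and mom3: "integrable M (\<lambda>\<omega>. znorm (eps 1 \<omega>) ^ l)"
  shows "(SUP k\<in>{1..}. (\<integral>\<^sup>+ \<omega>. ennreal (znorm (gwi xi eps k \<omega>) ^ l / real k ^ l) \<partial>M)) < \<infinity>"
proof -
  interpret P: prob_space M by fact
  interpret gwl M xi eps by unfold_locales (rule indep)
  have m111: "xi 1 1 1 \<in> measurable M (count_space UNIV)" using rv_fam[of "Inl (1,1,1)"] by simp
  have m112: "xi 1 1 2 \<in> measurable M (count_space UNIV)" using rv_fam[of "Inl (1,1,2)"] by simp
  have me1: "eps 1 \<in> measurable M (count_space UNIV)" using rv_fam[of "Inr 1"] by simp
  define \<mu> where "\<mu> = (\<integral>\<omega>. real (fst (eps 1 \<omega>)) \<partial>M) + (\<integral>\<omega>. real (snd (eps 1 \<omega>)) \<partial>M)"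
  have \<mu>0: "0 \<le> \<mu>" unfolding \<mu>_def by (intro add_nonneg_nonneg integral_nonneg_AE) auto
  define b1 where "b1 = 2 ^ l * (1 + (\<integral>\<omega>. znorm (xi 1 1 1 \<omega>) ^ l \<partial>M))"
  define b2 where "b2 = 2 ^ l * (1 + (\<integral>\<omega>. znorm (xi 1 1 2 \<omega>) ^ l \<partial>M))"
  define b3 where "b3 = 2 ^ l * (1 + (\<integral>\<omega>. znorm (eps 1 \<omega>) ^ l \<partial>M))"
  define B where "B = max 1 (max \<mu> (max b1 (max b2 b3)))"
  have B1: "1 \<le> B" and muB: "\<mu> \<le> B" and bB: "b1 \<le> B" "b2 \<le> B" "b3 \<le> B" unfolding B_def by auto
  interpret gwm M xi eps B \<mu> l
  proof (unfold_locales)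
    show "1 \<le> B" "0 \<le> \<mu>" "\<mu> \<le> B" by fact+
  next
    fix i assume i: "i \<in> gwi_index"
    show "(\<integral>\<^sup>+\<omega>. ennreal (V i \<omega>) \<partial>M) = ennreal (case i of Inl _ \<Rightarrow> 1 | Inr _ \<Rightarrow> \<mu>)"
    proof (cases i)
      case (Inl t)
      obtain k j i' where t: "t = (k, j, i')" by (cases t) auto
      have kj: "1 \<le> k" "1 \<le> j" "i' = 1 \<or> i' = 2" using i Inl t by auto
      have mk: "xi k j i' \<in> measurable M (count_space UNIV)" using rv_fam[of i] i Inl t by simp
      from kj(3) show ?thesis
      proof
        assume i': "i' = 1"
        have "(\<integral>\<^sup>+\<omega>. ennreal (V i \<omega>) \<partial>M) = (\<integral>\<^sup>+\<omega>. ennreal (real (fst (xi 1 1 1 \<omega>) + snd (xi 1 1 1 \<omega>))) \<partial>M)"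
          unfolding V_def Inl t i' fam_Inl
          by (rule P.distr_nn[OF id1[OF kj(1,2)], of "\<lambda>v. ennreal (real (fst v + snd v))"])
             (use mk i' m111 in auto)
        also have "\<dots> = 1" using P.gen_mean[OF m111 mom1 l] unfolding mean1 sum1 by simp
        finally show ?thesis using Inl by simp
      next
        assume i': "i' = 2"
        have "(\<integral>\<^sup>+\<omega>. ennreal (V i \<omega>) \<partial>M) = (\<integral>\<^sup>+\<omega>. ennreal (real (fst (xi 1 1 2 \<omega>) + snd (xi 1 1 2 \<omega>))) \<partial>M)"
          unfolding V_def Inl t i' fam_Inl
          by (rule P.distr_nn[OF id2[OF kj(1,2)], of "\<lambda>v. ennreal (real (fst v + snd v))"])
             (use mk i' m112 in auto)
        also have "\<dots> = 1" using P.gen_mean[OF m112 mom2 l] unfolding mean2 add.commute[of \<beta> \<alpha>] sum1 by simp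
        finally show ?thesis using Inl by simp
      qed
    next
      case (Inr k)
      have k: "1 \<le> k" using i Inr by simp
      have mk: "eps k \<in> measurable M (count_space UNIV)" using rv_fam[of i] i Inr by simp
      have "(\<integral>\<^sup>+\<omega>. ennreal (V i \<omega>) \<partial>M) = (\<integral>\<^sup>+\<omega>. ennreal (real (fst (eps 1 \<omega>) + snd (eps 1 \<omega>))) \<partial>M)"
        unfolding V_def Inr fam_Inr
        by (rule P.distr_nn[OF id3[OF k], of "\<lambda>v. ennreal (real (fst v + snd v))"])
           (use mk me1 in auto)
      also have "\<dots> = ennreal \<mu>" using P.gen_mean[OF me1 mom3 l] unfolding \<mu>_def by simp
      finally show ?thesis using Inr by simp
    qed
  next
    fix i q assume i: "i \<in> gwi_index" and q: "2 \<le> q" "q \<le> l"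
    show "(\<integral>\<^sup>+\<omega>. ennreal (V i \<omega> ^ q) \<partial>M) \<le> ennreal B"
    proof (cases i)
      case (Inl t)
      obtain k j i' where t: "t = (k, j, i')" by (cases t) auto
      have kj: "1 \<le> k" "1 \<le> j" "i' = 1 \<or> i' = 2" using i Inl t by auto
      have mk: "xi k j i' \<in> measurable M (count_space UNIV)" using rv_fam[of i] i Inl t by simp
      from kj(3) show ?thesis
      proof
        assume i': "i' = 1"
        have "(\<integral>\<^sup>+\<omega>. ennreal (V i \<omega> ^ q) \<partial>M) = (\<integral>\<^sup>+\<omega>. ennreal (real (fst (xi 1 1 1 \<omega>) + snd (xi 1 1 1 \<omega>)) ^ q) \<partial>M)"
          unfolding V_def Inl t i' fam_Inl
          by (rule P.distr_nn[OF id1[OF kj(1,2)], of "\<lambda>v. ennreal (real (fst v + snd v) ^ q)"])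
             (use mk i' m111 in auto)
        also have "\<dots> \<le> ennreal b1" unfolding b1_def by (rule P.gen_moment[OF m111 mom1 q(2)])
        also have "\<dots> \<le> ennreal B" using bB by (intro ennreal_leI) auto
        finally show ?thesis .
      next
        assume i': "i' = 2"
        have "(\<integral>\<^sup>+\<omega>. ennreal (V i \<omega> ^ q) \<partial>M) = (\<integral>\<^sup>+\<omega>. ennreal (real (fst (xi 1 1 2 \<omega>) + snd (xi 1 1 2 \<omega>)) ^ q) \<partial>M)"
          unfolding V_def Inl t i' fam_Inl
          by (rule P.distr_nn[OF id2[OF kj(1,2)], of "\<lambda>v. ennreal (real (fst v + snd v) ^ q)"])
             (use mk i' m112 in auto)
        also have "\<dots> \<le> ennreal b2" unfolding b2_def by (rule P.gen_moment[OF m112 mom2 q(2)])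
        also have "\<dots> \<le> ennreal B" using bB by (intro ennreal_leI) auto
        finally show ?thesis .
      qed
    next
      case (Inr k)
      have k: "1 \<le> k" using i Inr by simp
      have mk: "eps k \<in> measurable M (count_space UNIV)" using rv_fam[of i] i Inr by simp
      have "(\<integral>\<^sup>+\<omega>. ennreal (V i \<omega> ^ q) \<partial>M) = (\<integral>\<^sup>+\<omega>. ennreal (real (fst (eps 1 \<omega>) + snd (eps 1 \<omega>)) ^ q) \<partial>M)"
        unfolding V_def Inr fam_Inr
        by (rule P.distr_nn[OF id3[OF k], of "\<lambda>v. ennreal (real (fst v + snd v) ^ q)"])
           (use mk me1 in auto)
      also have "\<dots> \<le> ennreal b3" unfolding b3_def by (rule P.gen_moment[OF me1 mom3 q(2)])
      also have "\<dots> \<le> ennreal B" using bB by (intro ennreal_leI) auto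
      finally show ?thesis .
    qed
  qed
  obtain C where C0: "0 \<le> C" and C: "\<And>k. (\<integral>\<^sup>+\<omega>. ennreal (T k \<omega> ^ l) \<partial>M) \<le> ennreal (C * (real k + 1) ^ l)"
    using moments[of l] by auto
  have each: "(\<integral>\<^sup>+ \<omega>. ennreal (znorm (gwi xi eps k \<omega>) ^ l / real k ^ l) \<partial>M) \<le> ennreal (C * 2 ^ l)"
    if k: "k \<in> {1..}" for k
  proof -
    have k1: "1 \<le> real k" using k by simp
    have "(\<integral>\<^sup>+ \<omega>. ennreal (znorm (gwi xi eps k \<omega>) ^ l / real k ^ l) \<partial>M)
        \<le> (\<integral>\<^sup>+ \<omega>. ennreal (T k \<omega> ^ l) * ennreal (1 / real k ^ l) \<partial>M)"
    proof (rule nn_integral_mono)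
      fix \<omega>
      have "znorm (gwi xi eps k \<omega>) \<le> T k \<omega>"
        using znorm_le_tot[of "gwi xi eps k \<omega>"] unfolding T_def by simp
      then have "znorm (gwi xi eps k \<omega>) ^ l \<le> T k \<omega> ^ l" by (intro power_mono znorm_nonneg)
      then have "znorm (gwi xi eps k \<omega>) ^ l / real k ^ l \<le> T k \<omega> ^ l * (1 / real k ^ l)"
        using k1 by (simp add: divide_right_mono)
      then show "ennreal (znorm (gwi xi eps k \<omega>) ^ l / real k ^ l) \<le> ennreal (T k \<omega> ^ l) * ennreal (1 / real k ^ l)"
        using T_ge1[of k \<omega>] by (simp add: ennreal_mult[symmetric] ennreal_leI)
    qed
    also have "\<dots> = (\<integral>\<^sup>+ \<omega>. ennreal (T k \<omega> ^ l) \<partial>M) * ennreal (1 / real k ^ l)"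
      by (rule nn_integral_multc) (use T_meas[of k] in measurable)
    also have "\<dots> \<le> ennreal (C * (real k + 1) ^ l) * ennreal (1 / real k ^ l)"
      by (intro mult_right_mono C) auto
    also have "\<dots> = ennreal (C * (real k + 1) ^ l / real k ^ l)"
      using C0 k1 by (simp add: ennreal_mult[symmetric])
    also have "\<dots> \<le> ennreal (C * 2 ^ l)"
    proof (rule ennreal_leI)
      have "(real k + 1) ^ l \<le> (2 * real k) ^ l" using k1 by (intro power_mono) auto
      also have "\<dots> = 2 ^ l * real k ^ l" by (simp add: power_mult_distrib)
      finally have "(real k + 1) ^ l / real k ^ l \<le> 2 ^ l"
        using k1 by (simp add: divide_le_eq)
      then show "C * (real k + 1) ^ l / real k ^ l \<le> C * 2 ^ l"
        using C0 by (metis mult_left_mono times_divide_eq_right)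
    qed
    finally show ?thesis .
  qed
  have "(SUP k\<in>{1..}. (\<integral>\<^sup>+ \<omega>. ennreal (znorm (gwi xi eps k \<omega>) ^ l / real k ^ l) \<partial>M)) \<le> ennreal (C * 2 ^ l)"
    by (rule SUP_least) (rule each)
  also have "\<dots> < \<infinity>" by simp
  finally show ?thesis .
qed



end
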